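(* Let $T$ be a graph on a countably infinite set $X$ with bounded degree, $\mu$ a $T$-invariant mean on $X$ with associated measure $\bar\mu$ on $\beta X$, and let $W$ be a subgraph of $T$ with $V(W)=X$. Then for every integer $l\ge1$, the $\mu$-measure of the set of points $x\in X$ whose connected component in $W$ has exactly $l$ vertices equals the $\bar\mu$-measure of the set of points $\omega\in\beta X$ whose connected component in $\mathcal G(W)$ has exactly $l$ vertices.
   Context: A mean on $X$ is a finitely additive $\mu:2^X\to[0,1]$ with $\mu(X)=1$; $\bar\mu$ is the unique regular Borel probability on $\beta X$ (the ultrafilters on $X$) with $\bar\mu(U_A)=\mu(A)$ where $U_A=\{\omega:A\in\omega\}$. A mean is $T$-invariant if it is invariant under some (equivalently every) action of a finitely generated group on $X$ whose Schreier graph with respect to a finite symmetric generating set is $T$ (Schreier graph: edge $\{x,y\}$ when $x\neq y$ and $s(x)=y$ for a generator $s$). For a bounded degree graph $W$ on $X$, $\mathcal G(W)$ is the graph on $\beta X$ with an edge $\{\omega,\omega'\}$ when $\omega\neq\omega'$ and $\tilde s(\omega)=\omega'$ for a generator $s$ of some finitely generated group action on $X$ with Schreier graph $W$, where $\tilde s(\omega)=\{s(A):A\in\omega\}$; this does not depend on the chosen action. *)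

theory Defs
  imports "HOL-Probability.Probability"
begin

definition is_graph :: "('a \<Rightarrow> 'a \<Rightarrow> bool) \<Rightarrow> bool" where
  "is_graph E \<longleftrightarrow> (\<forall>x y. E x y \<longrightarrow> E y x) \<and> (\<forall>x. \<not> E x x)"

definition bounded_degree :: "('a \<Rightarrow> 'a \<Rightarrow> bool) \<Rightarrow> bool" where
  "bounded_degree E \<longleftrightarrow> (\<exists>d::nat. \<forall>x. finite {y. E x y} \<and> card {y. E x y} \<le> d)"

definition component :: "('a \<Rightarrow> 'a \<Rightarrow> bool) \<Rightarrow> 'a \<Rightarrow> 'a set" where
  "component E x = {y. E\<^sup>*\<^sup>* x y}"

definition comp_size_eq :: "('a \<Rightarrow> 'a \<Rightarrow> bool) \<Rightarrow> nat \<Rightarrow> 'a \<Rightarrow> bool" where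
  "comp_size_eq E l x \<longleftrightarrow> finite (component E x) \<and> card (component E x) = l"

text \<open>A finitely generated group acting on X with finite symmetric generating set is
  represented by the finite, inverse-closed set S of bijections of X given by the generators.\<close>

definition gen_action :: "('a \<Rightarrow> 'a) set \<Rightarrow> bool" where
  "gen_action S \<longleftrightarrow> finite S \<and> (\<forall>s\<in>S. bij s) \<and> (\<forall>s\<in>S. inv s \<in> S)"

definition schreier :: "('a \<Rightarrow> 'a) set \<Rightarrow> 'a \<Rightarrow> 'a \<Rightarrow> bool" where
  "schreier S x y \<longleftrightarrow> x \<noteq> y \<and> (\<exists>s\<in>S. s x = y)"

definition is_mean :: "('a set \<Rightarrow> real) \<Rightarrow> bool" where
  "is_mean \<mu> \<longleftrightarrow> (\<forall>A. 0 \<le> \<mu> A \<and> \<mu> A \<le> 1) \<and> \<mu> UNIV = 1 \<and>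
     (\<forall>A B. A \<inter> B = {} \<longrightarrow> \<mu> (A \<union> B) = \<mu> A + \<mu> B)"

definition invariant_mean :: "('a \<Rightarrow> 'a \<Rightarrow> bool) \<Rightarrow> ('a set \<Rightarrow> real) \<Rightarrow> bool" where
  "invariant_mean T \<mu> \<longleftrightarrow> is_mean \<mu> \<and>
     (\<exists>S. gen_action S \<and> schreier S = T \<and> (\<forall>s\<in>S. \<forall>A. \<mu> (s ` A) = \<mu> A))"

definition is_ultrafilter :: "'a set set \<Rightarrow> bool" where
  "is_ultrafilter \<omega> \<longleftrightarrow> UNIV \<in> \<omega> \<and> {} \<notin> \<omega> \<and>
     (\<forall>A B. A \<in> \<omega> \<and> A \<subseteq> B \<longrightarrow> B \<in> \<omega>) \<and>
     (\<forall>A B. A \<in> \<omega> \<and> B \<in> \<omega> \<longrightarrow> A \<inter> B \<in> \<omega>) \<and>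
     (\<forall>A. A \<in> \<omega> \<or> - A \<in> \<omega>)"

definition betaX :: "'a set set set" where
  "betaX = {\<omega>. is_ultrafilter \<omega>}"

definition UA :: "'a set \<Rightarrow> 'a set set set" where
  "UA A = {\<omega> \<in> betaX. A \<in> \<omega>}"

definition beta_top :: "'a set set topology" where
  "beta_top = topology_generated_by (range UA)"

definition beta_borel_sets :: "'a set set set set" where
  "beta_borel_sets = sigma_sets betaX {U. openin beta_top U}"

definition regular_on :: "'b topology \<Rightarrow> 'b measure \<Rightarrow> bool" where
  "regular_on \<tau> M \<longleftrightarrow> (\<forall>B \<in> sets M.
      measure M B = (SUP K \<in> {K. compactin \<tau> K \<and> K \<subseteq> B}. measure M K) \<and>
      measure M B = (INF U \<in> {U. openin \<tau> U \<and> B \<subseteq> U}. measure M U))"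

definition mean_extension :: "('a set \<Rightarrow> real) \<Rightarrow> 'a set set measure \<Rightarrow> bool" where
  "mean_extension \<mu> M \<longleftrightarrow> prob_space M \<and> space M = betaX \<and> sets M = beta_borel_sets \<and>
     regular_on beta_top M \<and> (\<forall>A. measure M (UA A) = \<mu> A)"

definition tilde :: "('a \<Rightarrow> 'a) \<Rightarrow> 'a set set \<Rightarrow> 'a set set" where
  "tilde s \<omega> = {s ` A | A. A \<in> \<omega>}"

definition GW :: "('a \<Rightarrow> 'a \<Rightarrow> bool) \<Rightarrow> 'a set set \<Rightarrow> 'a set set \<Rightarrow> bool" where
  "GW W \<omega> \<omega>' \<longleftrightarrow> \<omega> \<in> betaX \<and> \<omega>' \<in> betaX \<and> \<omega> \<noteq> \<omega>' \<and>
     (\<exists>S. gen_action S \<and> schreier S = W \<and> (\<exists>s\<in>S. tilde s \<omega> = \<omega>'))"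

end

theory Submission
  imports Defs
begin


lemma uf_up: "is_ultrafilter \<omega> \<Longrightarrow> A \<in> \<omega> \<Longrightarrow> A \<subseteq> B \<Longrightarrow> B \<in> \<omega>"
  unfolding is_ultrafilter_def by blast

lemma uf_Int: "is_ultrafilter \<omega> \<Longrightarrow> (A \<inter> B \<in> \<omega>) = (A \<in> \<omega> \<and> B \<in> \<omega>)"
  unfolding is_ultrafilter_def by (metis Int_lower1 Int_lower2)

lemma uf_compl: "is_ultrafilter \<omega> \<Longrightarrow> (- A \<in> \<omega>) = (A \<notin> \<omega>)"
  unfolding is_ultrafilter_def by (metis Compl_disjoint)

lemma uf_Un: "is_ultrafilter \<omega> \<Longrightarrow> A \<union> B \<in> \<omega> \<Longrightarrow> A \<in> \<omega> \<or> B \<in> \<omega>"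
proof (rule ccontr)
  assume u: "is_ultrafilter \<omega>" and ab: "A \<union> B \<in> \<omega>" and n: "\<not> (A \<in> \<omega> \<or> B \<in> \<omega>)"
  then have "- A \<inter> - B \<in> \<omega>" using uf_compl uf_Int by blast
  then have "(A \<union> B) \<inter> (- A \<inter> - B) \<in> \<omega>" using u ab uf_Int by blast
  moreover have "(A \<union> B) \<inter> (- A \<inter> - B) = {}" by blast
  ultimately show False using u unfolding is_ultrafilter_def by simp
qed

lemma uf_UN: assumes u: "is_ultrafilter \<omega>" and fin: "finite I"
  shows "(\<Union>i\<in>I. F i) \<in> \<omega> \<Longrightarrow> \<exists>i\<in>I. F i \<in> \<omega>"
  using fin
proof (induction I rule: finite_induct)
  case empty
  then show ?case using u unfolding is_ultrafilter_def by simp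
next
  case (insert x I)
  then have "F x \<union> (\<Union>i\<in>I. F i) \<in> \<omega>" by simp
  then show ?case using insert u uf_Un by blast
qed

lemma uf_All_list: "is_ultrafilter \<omega> \<Longrightarrow> ({x. \<forall>v\<in>set vs. P v x} \<in> \<omega>) = (\<forall>v\<in>set vs. {x. P v x} \<in> \<omega>)"
proof (induction vs)
  case Nil
  then show ?case unfolding is_ultrafilter_def by simp
next
  case (Cons a vs)
  have e: "{x. \<forall>v\<in>set (a#vs). P v x} = {x. P a x} \<inter> {x. \<forall>v\<in>set vs. P v x}" by auto
  have "({x. \<forall>v\<in>set (a#vs). P v x} \<in> \<omega>) = ({x. P a x} \<in> \<omega> \<and> {x. \<forall>v\<in>set vs. P v x} \<in> \<omega>)"
    unfolding e by (rule uf_Int[OF Cons.prems])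
  then show ?case using Cons.IH Cons.prems by simp
qed

lemma tilde_eq: "bij s \<Longrightarrow> tilde s \<omega> = {A. s -` A \<in> \<omega>}"
  unfolding tilde_def
proof (intro set_eqI iffI)
  fix A assume b: "bij s" and "A \<in> {s ` B |B. B \<in> \<omega>}"
  then obtain B where "A = s ` B" "B \<in> \<omega>" by blast
  then show "A \<in> {A. s -` A \<in> \<omega>}" using b by (simp add: bij_is_inj inj_vimage_image_eq)
next
  fix A assume b: "bij s" and "A \<in> {A. s -` A \<in> \<omega>}"
  then have "A = s ` (s -` A)" by (simp add: bij_is_surj surj_image_vimage_eq)
  then show "A \<in> {s ` B |B. B \<in> \<omega>}" using \<open>A \<in> {A. s -` A \<in> \<omega>}\<close> by blast
qed

lemma tilde_betaX: "bij s \<Longrightarrow> \<omega> \<in> betaX \<Longrightarrow> tilde s \<omega> \<in> betaX"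
proof -
  assume b: "bij s" and o: "\<omega> \<in> betaX"
  then have u: "is_ultrafilter \<omega>" unfolding betaX_def by simp
  have "is_ultrafilter {A. s -` A \<in> \<omega>}"
    unfolding is_ultrafilter_def
  proof (intro conjI allI impI)
    show "UNIV \<in> {A. s -` A \<in> \<omega>}" using u unfolding is_ultrafilter_def by simp
    show "{} \<notin> {A. s -` A \<in> \<omega>}" using u unfolding is_ultrafilter_def by simp
    fix A B
    show "A \<in> {A. s -` A \<in> \<omega>} \<and> A \<subseteq> B \<Longrightarrow> B \<in> {A. s -` A \<in> \<omega>}"
      using uf_up[OF u, of "s -` A" "s -` B"] by auto
    show "A \<in> {A. s -` A \<in> \<omega>} \<and> B \<in> {A. s -` A \<in> \<omega>} \<Longrightarrow> A \<inter> B \<in> {A. s -` A \<in> \<omega>}"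
      using uf_Int[OF u, of "s -` A" "s -` B"] by (simp add: vimage_Int)
  next
    fix A
    show "A \<in> {A. s -` A \<in> \<omega>} \<or> - A \<in> {A. s -` A \<in> \<omega>}"
      using uf_compl[OF u, of "s -` A"] by (simp add: vimage_Compl)
  qed
  then show ?thesis using b unfolding betaX_def by (simp add: tilde_eq)
qed

lemma tilde_comp: "bij s \<Longrightarrow> bij t \<Longrightarrow> tilde s (tilde t \<omega>) = tilde (s \<circ> t) \<omega>"
  using bij_comp[of t s] by (simp add: tilde_eq vimage_comp)

lemma tilde_id: "tilde id \<omega> = \<omega>"
  by (simp add: tilde_eq)

lemma tilde_agree: "is_ultrafilter \<omega> \<Longrightarrow> bij u \<Longrightarrow> bij v \<Longrightarrow> {x. u x = v x} \<in> \<omega> \<Longrightarrow> tilde u \<omega> = tilde v \<omega>"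
proof -
  assume uf: "is_ultrafilter \<omega>" and bu: "bij u" and bv: "bij v" and E: "{x. u x = v x} \<in> \<omega>"
  have "\<And>A. (u -` A \<in> \<omega>) = (v -` A \<in> \<omega>)"
  proof -
    fix A
    have "u -` A \<inter> {x. u x = v x} = v -` A \<inter> {x. u x = v x}" by auto
    then show "(u -` A \<in> \<omega>) = (v -` A \<in> \<omega>)" using uf_Int[OF uf] E by metis
  qed
  then show ?thesis using bu bv by (simp add: tilde_eq)
qed



primrec gcol :: "('a::countable \<Rightarrow> 'a \<Rightarrow> bool) \<Rightarrow> nat \<Rightarrow> 'a \<Rightarrow> nat" where
  "gcol D 0 = (\<lambda>_. 0)"
| "gcol D (Suc n) = (\<lambda>x. if to_nat x = n then (LEAST k. \<forall>y. D x y \<and> to_nat y < n \<longrightarrow> gcol D n y \<noteq> k) else gcol D n x)"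

lemma gcol_stable: "Suc (to_nat x) \<le> m \<Longrightarrow> gcol D m x = gcol D (Suc (to_nat x)) x"
proof (induction m)
  case 0 then show ?case by simp
next
  case (Suc m)
  show ?case
  proof (cases "Suc (to_nat x) = Suc m")
    case True then show ?thesis by simp
  next
    case False
    then have "Suc (to_nat x) \<le> m" using Suc.prems by simp
    then show ?thesis using Suc.IH by simp
  qed
qed

lemma coloring:
  fixes D :: "'a::countable \<Rightarrow> 'a \<Rightarrow> bool"
  assumes sym: "\<And>x y. D x y \<Longrightarrow> D y x" and irr: "\<And>x. \<not> D x x"
    and deg: "\<And>x. finite {y. D x y} \<and> card {y. D x y} \<le> d"
  shows "\<exists>c::'a \<Rightarrow> nat. (\<forall>x. c x \<le> d) \<and> (\<forall>x y. D x y \<longrightarrow> c x \<noteq> c y)"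
proof -
  define c where "c x = gcol D (Suc (to_nat x)) x" for x
  let ?P = "\<lambda>x k. \<forall>y. D x y \<and> to_nat y < to_nat x \<longrightarrow> gcol D (to_nat x) y \<noteq> k"
  have cx: "c x = (LEAST k. ?P x k)" for x unfolding c_def by simp
  have ex: "\<exists>k\<le>d. ?P x k" for x
  proof -
    let ?F = "(\<lambda>y. gcol D (to_nat x) y) ` {y. D x y}"
    have "finite ?F" using deg[of x] by auto
    have "card ?F \<le> card {y. D x y}" using deg[of x] by (intro card_image_le) auto
    then have "card ?F \<le> d" using deg[of x] by linarith
    have "\<not> {0..d} \<subseteq> ?F"
    proof
      assume "{0..d} \<subseteq> ?F"
      then have "card {0..d} \<le> card ?F" using \<open>finite ?F\<close> by (rule card_mono[rotated])
      then show False using \<open>card ?F \<le> d\<close> by simp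
    qed
    then obtain k where "k \<in> {0..d}" "k \<notin> ?F" by blast
    then show ?thesis by (intro exI[of _ k]) auto
  qed
  have P: "?P x (c x) \<and> c x \<le> d" for x
  proof -
    obtain k where "k \<le> d" "?P x k" using ex by blast
    then have "?P x (LEAST k. ?P x k)" "(LEAST k. ?P x k) \<le> k"
      using LeastI[of "?P x" k] Least_le[of "?P x" k] by blast+
    then show ?thesis unfolding cx using \<open>k \<le> d\<close> by simp
  qed
  have cstab: "gcol D (to_nat x) y = c y" if "to_nat y < to_nat x" for x y
    unfolding c_def using gcol_stable[of y "to_nat x" D] that by simp
  have "c x \<noteq> c y" if "D x y" for x y
  proof -
    have "x \<noteq> y" using irr that by blast
    then have "to_nat x \<noteq> to_nat y" by simp
    then consider "to_nat y < to_nat x" | "to_nat x < to_nat y" by linarith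
    then show ?thesis
    proof cases
      case 1 then show ?thesis using P[of x] cstab[OF 1] that by metis
    next
      case 2 then show ?thesis using P[of y] cstab[OF 2] sym[OF that] by metis
    qed
  qed
  then show ?thesis using P by blast
qed



lemma schreier_exists:
  fixes W :: "'a::countable \<Rightarrow> 'a \<Rightarrow> bool"
  assumes gr: "is_graph W" and deg: "\<And>x. finite {y. W x y} \<and> card {y. W x y} \<le> d"
  shows "\<exists>S. gen_action S \<and> schreier S = W"
proof -
  have Wsym: "W x y \<Longrightarrow> W y x" for x y using gr unfolding is_graph_def by blast
  have Wirr: "\<not> W x x" for x using gr unfolding is_graph_def by blast
  define D2 where "D2 x y \<longleftrightarrow> x \<noteq> y \<and> (W x y \<or> (\<exists>z. W x z \<and> W z y))" for x y
  have D2deg: "finite {y. D2 x y} \<and> card {y. D2 x y} \<le> d + d * d" for x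
  proof -
    let ?N = "\<lambda>z. {y. W z y}"
    have sub: "{y. D2 x y} \<subseteq> ?N x \<union> (\<Union>z\<in>?N x. ?N z)" unfolding D2_def by blast
    have f: "finite (?N x \<union> (\<Union>z\<in>?N x. ?N z))" using deg by auto
    have "card (\<Union>z\<in>?N x. ?N z) \<le> (\<Sum>z\<in>?N x. card (?N z))" using deg by (intro card_UN_le) auto
    also have "\<dots> \<le> card (?N x) * d" using sum_bounded_above[of "?N x" "\<lambda>z. card (?N z)" d] deg by auto
    also have "\<dots> \<le> d * d" using deg[of x] by simp
    finally have "card (?N x \<union> (\<Union>z\<in>?N x. ?N z)) \<le> d + d * d"
      using card_Un_le[of "?N x" "\<Union>z\<in>?N x. ?N z"] deg[of x] by linarith
    then show ?thesis using sub f card_mono[OF f sub] finite_subset[OF sub f] by linarith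
  qed
  obtain c :: "'a \<Rightarrow> nat" where cb: "\<And>x. c x \<le> d + d * d" and cD: "\<And>x y. D2 x y \<Longrightarrow> c x \<noteq> c y"
  proof -
    have "\<And>x y. D2 x y \<Longrightarrow> D2 y x" unfolding D2_def using Wsym by blast
    moreover have "\<And>x. \<not> D2 x x" unfolding D2_def by blast
    ultimately have "\<exists>c::'a \<Rightarrow> nat. (\<forall>x. c x \<le> d + d * d) \<and> (\<forall>x y. D2 x y \<longrightarrow> c x \<noteq> c y)"
      using coloring[of D2 "d + d * d"] D2deg by blast
    then show ?thesis using that by blast
  qed
  have uniq: "W x y \<Longrightarrow> W x y' \<Longrightarrow> c y = c y' \<Longrightarrow> y = y'" for x y y'
    using cD[of y y'] Wsym unfolding D2_def by blast
  have Wc: "W x y \<Longrightarrow> c x \<noteq> c y" for x y using cD[of x y] Wirr unfolding D2_def by blast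
  define sw where "sw i j x = (if c x = i \<and> (\<exists>y. W x y \<and> c y = j) then (THE y. W x y \<and> c y = j)
      else if c x = j \<and> (\<exists>y. W x y \<and> c y = i) then (THE y. W x y \<and> c y = i) else x)" for i j x
  have the1: "W x y \<Longrightarrow> c y = j \<Longrightarrow> (THE y. W x y \<and> c y = j) = y" for x y j
    using uniq by blast
  have swa: "c x = i \<Longrightarrow> W x y \<Longrightarrow> c y = j \<Longrightarrow> sw i j x = y" for i j x y
  proof -
    assume h: "c x = i" "W x y" "c y = j"
    then have "c x = i \<and> (\<exists>y. W x y \<and> c y = j)" by blast
    then have "sw i j x = (THE y. W x y \<and> c y = j)" unfolding sw_def by (rule if_P)
    then show ?thesis using the1[OF h(2) h(3)] by simp
  qed
  have swb: "i \<noteq> j \<Longrightarrow> c x = j \<Longrightarrow> W x y \<Longrightarrow> c y = i \<Longrightarrow> sw i j x = y" for i j x y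
  proof -
    assume h: "i \<noteq> j" "c x = j" "W x y" "c y = i"
    then have n: "\<not> (c x = i \<and> (\<exists>y. W x y \<and> c y = j))" by blast
    have p: "c x = j \<and> (\<exists>y. W x y \<and> c y = i)" using h by blast
    have "sw i j x = (if c x = j \<and> (\<exists>y. W x y \<and> c y = i) then (THE y. W x y \<and> c y = i) else x)"
      unfolding sw_def by (rule if_not_P[OF n])
    also have "\<dots> = (THE y. W x y \<and> c y = i)" by (rule if_P[OF p])
    finally have "sw i j x = (THE y. W x y \<and> c y = i)" .
    then show ?thesis using the1[OF h(3) h(4)] by simp
  qed
  have swc: "\<not>(c x = i \<and> (\<exists>y. W x y \<and> c y = j)) \<Longrightarrow> \<not>(c x = j \<and> (\<exists>y. W x y \<and> c y = i)) \<Longrightarrow> sw i j x = x" for i j x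
    unfolding sw_def by (simp only: if_not_P if_False)
  have inv2: "i \<noteq> j \<Longrightarrow> sw i j (sw i j x) = x" for i j x
  proof -
    assume ij: "i \<noteq> j"
    show ?thesis
    proof (cases "c x = i \<and> (\<exists>y. W x y \<and> c y = j)")
      case True
      then obtain y where y: "c x = i" "W x y" "c y = j" by blast
      have "sw i j x = y" using swa[OF y] .
      moreover have "sw i j y = x" using swb[OF ij y(3) Wsym[OF y(2)] y(1)] .
      ultimately show ?thesis by simp
    next
      case F: False
      show ?thesis
      proof (cases "c x = j \<and> (\<exists>y. W x y \<and> c y = i)")
        case True
        then obtain y where y: "c x = j" "W x y" "c y = i" by blast
        have "sw i j x = y" using swb[OF ij y] .
        moreover have "sw i j y = x" using swa[OF y(3) Wsym[OF y(2)] y(1)] .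
        ultimately show ?thesis by simp
      next
        case False
        then show ?thesis using swc[OF F False] by simp
      qed
    qed
  qed
  define K where "K = d + d * d"
  define S where "S = (\<lambda>(i, j). sw i j) ` {(i, j). i \<le> K \<and> j \<le> K \<and> i \<noteq> j}"
  have bijsw: "i \<noteq> j \<Longrightarrow> bij (sw i j) \<and> inv (sw i j) = sw i j" for i j
  proof -
    assume "i \<noteq> j"
    then have "sw i j \<circ> sw i j = id" using inv2 by auto
    then show ?thesis using o_bij inv_unique_comp by metis
  qed
  have "finite {(i, j). i \<le> K \<and> j \<le> K \<and> i \<noteq> j}"
    by (rule finite_subset[of _ "{..K} \<times> {..K}"]) auto
  then have "gen_action S" unfolding gen_action_def S_def
    using bijsw by auto
  moreover have "schreier S = W"
  proof (intro ext iffI)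
    fix x y assume "schreier S x y"
    then obtain i j where ij: "i \<noteq> j" "sw i j x = y" "x \<noteq> y" unfolding schreier_def S_def by auto
    show "W x y"
    proof (cases "c x = i \<and> (\<exists>y. W x y \<and> c y = j)")
      case True
      then obtain y' where y': "c x = i" "W x y'" "c y' = j" by blast
      then show ?thesis using swa[OF y'] ij by simp
    next
      case F: False
      show ?thesis
      proof (cases "c x = j \<and> (\<exists>y. W x y \<and> c y = i)")
        case True
        then obtain y' where y': "c x = j" "W x y'" "c y' = i" by blast
        then show ?thesis using swb[OF ij(1) y'] ij by simp
      next
        case False
        then show ?thesis using swc[OF F False] ij by simp
      qed
    qed
  next
    fix x y assume w: "W x y"
    then have "c x \<noteq> c y" "x \<noteq> y" using Wc Wirr by auto
    moreover have "sw (c x) (c y) x = y" using swa[OF refl w refl] .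
    ultimately have "sw (c x) (c y) \<in> S" "x \<noteq> y" "sw (c x) (c y) x = y"
      unfolding S_def K_def using cb[of x] cb[of y] by (auto intro!: image_eqI[of _ _ "(c x, c y)"])
    then show "schreier S x y" unfolding schreier_def by blast
  qed
  ultimately show ?thesis by blast
qed



primrec ev :: "('a \<Rightarrow> 'a) list \<Rightarrow> 'a \<Rightarrow> 'a" where
  "ev [] = id"
| "ev (s # w) = s \<circ> ev w"

lemma ev_bij: "gen_action S \<Longrightarrow> set w \<subseteq> S \<Longrightarrow> bij (ev w)"
  by (induction w) (auto simp: gen_action_def intro: bij_comp)

lemma sep:
  fixes u v :: "'a::countable \<Rightarrow> 'a"
  assumes uf: "is_ultrafilter a" and bu: "bij u" and bv: "bij v" and N: "{x. u x \<noteq> v x} \<in> a"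
  shows "tilde u a \<noteq> tilde v a"
proof
  assume eq: "tilde u a = tilde v a"
  define R where "R x y \<longleftrightarrow> x \<noteq> y \<and> (u x = v y \<or> u y = v x)" for x y
  have deg: "finite {y. R x y} \<and> card {y. R x y} \<le> 2" for x
  proof -
    have sub: "{y. R x y} \<subseteq> {inv v (u x), inv u (v x)}"
      unfolding R_def using bu bv by (auto simp: bij_is_inj inv_f_f) (metis bij_is_inj inv_f_f)
    have "card {inv v (u x), inv u (v x)} \<le> 2" by (simp add: card_insert_if)
    then show ?thesis using card_mono[OF _ sub] finite_subset[OF sub] by fastforce
  qed
  have "\<exists>c::'a \<Rightarrow> nat. (\<forall>x. c x \<le> 2) \<and> (\<forall>x y. R x y \<longrightarrow> c x \<noteq> c y)"
    by (rule coloring) (use deg in \<open>auto simp: R_def\<close>)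
  then obtain c :: "'a \<Rightarrow> nat" where cb: "\<And>x. c x \<le> 2" and cR: "\<And>x y. R x y \<Longrightarrow> c x \<noteq> c y" by blast
  have "{x. u x \<noteq> v x} = (\<Union>k\<in>{0..2::nat}. {x. u x \<noteq> v x} \<inter> {x. c x = k})" using cb by auto
  then obtain k where kB: "{x. u x \<noteq> v x} \<inter> {x. c x = k} \<in> a"
    using uf_UN[OF uf, of "{0..2::nat}" "\<lambda>k. {x. u x \<noteq> v x} \<inter> {x. c x = k}"] N by auto
  define B where "B = {x. u x \<noteq> v x} \<inter> {x. c x = k}"
  have "u ` B \<in> tilde u a" using kB bu unfolding B_def by (simp add: tilde_eq bij_is_inj inj_vimage_image_eq)
  then have "v -` (u ` B) \<in> a" using eq bv by (simp add: tilde_eq)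
  then have "B \<inter> v -` (u ` B) \<in> a" using uf_Int[OF uf] kB unfolding B_def by blast
  then have "B \<inter> v -` (u ` B) \<noteq> {}" using uf unfolding is_ultrafilter_def by auto
  then obtain x y where xy: "y \<in> B" "x \<in> B" "v y = u x" by blast
  show False
  proof (cases "x = y")
    case True then show ?thesis using xy unfolding B_def by auto
  next
    case False
    then have "R x y" unfolding R_def using xy by auto
    then show ?thesis using cR xy unfolding B_def by auto
  qed
qed

lemma pair_iff:
  fixes u v :: "'a::countable \<Rightarrow> 'a"
  assumes uf: "is_ultrafilter a" and bu: "bij u" and bv: "bij v"
  shows "({x. u x \<noteq> v x} \<in> a) = (tilde u a \<noteq> tilde v a)"
proof
  assume "{x. u x \<noteq> v x} \<in> a" then show "tilde u a \<noteq> tilde v a" using sep uf bu bv by blast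
next
  assume ne: "tilde u a \<noteq> tilde v a"
  show "{x. u x \<noteq> v x} \<in> a"
  proof (rule ccontr)
    assume "{x. u x \<noteq> v x} \<notin> a"
    then have "- {x. u x \<noteq> v x} \<in> a" using uf_compl[OF uf] by blast
    moreover have "- {x. u x \<noteq> v x} = {x. u x = v x}" by auto
    ultimately show False using tilde_agree[OF uf bu bv] ne by simp
  qed
qed

lemma dset_iff:
  fixes ws :: "('a::countable \<Rightarrow> 'a) list list"
  assumes uf: "is_ultrafilter a"
  shows "(\<forall>w\<in>set ws. bij (ev w)) \<Longrightarrow>
    ({x. distinct (map (\<lambda>w. ev w x) ws)} \<in> a) = distinct (map (\<lambda>w. tilde (ev w) a) ws)"
proof (induction ws)
  case Nil
  then show ?case using uf unfolding is_ultrafilter_def by simp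
next
  case (Cons w ws)
  have e: "{x. distinct (map (\<lambda>w. ev w x) (w # ws))} =
      {x. \<forall>v\<in>set ws. ev w x \<noteq> ev v x} \<inter> {x. distinct (map (\<lambda>w. ev w x) ws)}" by auto
  have "({x. \<forall>v\<in>set ws. ev w x \<noteq> ev v x} \<in> a) = (\<forall>v\<in>set ws. {x. ev w x \<noteq> ev v x} \<in> a)"
    by (rule uf_All_list[OF uf])
  also have "\<dots> = (\<forall>v\<in>set ws. tilde (ev w) a \<noteq> tilde (ev v) a)"
    using pair_iff[OF uf] Cons.prems by simp
  finally have 1: "({x. \<forall>v\<in>set ws. ev w x \<noteq> ev v x} \<in> a) = (\<forall>v\<in>set ws. tilde (ev w) a \<noteq> tilde (ev v) a)" .
  have "({x. distinct (map (\<lambda>w. ev w x) (w # ws))} \<in> a) =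
     ((\<forall>v\<in>set ws. tilde (ev w) a \<noteq> tilde (ev v) a) \<and> distinct (map (\<lambda>w. tilde (ev w) a) ws))"
    unfolding e uf_Int[OF uf] 1 using Cons by simp
  then show ?case by auto
qed



definition geS :: "nat \<Rightarrow> 'b set \<Rightarrow> bool" where
  "geS k C \<longleftrightarrow> (\<exists>F\<subseteq>C. finite F \<and> card F = k)"

lemma cse_iff: "comp_size_eq E l x \<longleftrightarrow> geS l (component E x) \<and> \<not> geS (Suc l) (component E x)"
proof -
  let ?C = "component E x"
  show ?thesis
  proof
    assume "comp_size_eq E l x"
    then have f: "finite ?C" "card ?C = l" unfolding comp_size_eq_def by auto
    have "\<not> geS (Suc l) ?C"
    proof
      assume "geS (Suc l) ?C"
      then obtain F where F: "F \<subseteq> ?C" "card F = Suc l" unfolding geS_def by blast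
      have "card F \<le> card ?C" by (rule card_mono[OF f(1) F(1)])
      then show False using F(2) f(2) by linarith
    qed
    moreover have "geS l ?C" unfolding geS_def using f by blast
    ultimately show "geS l ?C \<and> \<not> geS (Suc l) ?C" by blast
  next
    assume h: "geS l ?C \<and> \<not> geS (Suc l) ?C"
    have f: "finite ?C"
    proof (rule ccontr)
      assume "infinite ?C"
      then obtain B where "finite B" "card B = Suc l" "B \<subseteq> ?C"
        using infinite_arbitrarily_large[of ?C "Suc l"] by blast
      then show False using h unfolding geS_def by blast
    qed
    obtain F where F: "F \<subseteq> ?C" "card F = l" using h unfolding geS_def by blast
    have "card F \<le> card ?C" by (rule card_mono[OF f F(1)])
    then have "l \<le> card ?C" using F(2) by simp
    moreover have "\<not> Suc l \<le> card ?C"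
    proof
      assume "Suc l \<le> card ?C"
      then obtain T where "T \<subseteq> ?C" "card T = Suc l" "finite T" by (rule obtain_subset_with_card_n)
      then show False using h unfolding geS_def by blast
    qed
    ultimately show "comp_size_eq E l x" using f unfolding comp_size_eq_def by simp
  qed
qed

lemma geS_image: "geS k (f ` Q) \<longleftrightarrow> (\<exists>ws. length ws = k \<and> set ws \<subseteq> Q \<and> distinct (map f ws))"
proof
  assume "geS k (f ` Q)"
  then obtain F where F: "F \<subseteq> f ` Q" "finite F" "card F = k" unfolding geS_def by blast
  obtain xs where xs: "distinct xs" "set xs = F" using finite_distinct_list[OF F(2)] by blast
  define g where "g y = (SOME w. w \<in> Q \<and> f w = y)" for y
  have g: "y \<in> F \<Longrightarrow> g y \<in> Q \<and> f (g y) = y" for y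
  proof -
    assume "y \<in> F"
    then obtain w where "w \<in> Q" "f w = y" using F(1) by blast
    then have "\<exists>w. w \<in> Q \<and> f w = y" by blast
    then show ?thesis unfolding g_def by (rule someI_ex)
  qed
  have "map f (map g xs) = xs" unfolding map_map by (rule map_idI) (use g xs(2) in auto)
  moreover have "length xs = k" using xs F(3) distinct_card by fastforce
  ultimately show "\<exists>ws. length ws = k \<and> set ws \<subseteq> Q \<and> distinct (map f ws)"
    using xs g by (intro exI[of _ "map g xs"]) auto
next
  assume "\<exists>ws. length ws = k \<and> set ws \<subseteq> Q \<and> distinct (map f ws)"
  then obtain ws where ws: "length ws = k" "set ws \<subseteq> Q" "distinct (map f ws)" by blast
  then have "card (set (map f ws)) = k" using distinct_card by fastforce
  then show "geS k (f ` Q)" unfolding geS_def using ws by (intro exI[of _ "set (map f ws)"]) auto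
qed

lemma compW:
  assumes ga: "gen_action S" and sw: "schreier S = W"
  shows "component W x = (\<lambda>w. ev w x) ` {w. set w \<subseteq> S}"
proof
  show "component W x \<subseteq> (\<lambda>w. ev w x) ` {w. set w \<subseteq> S}"
  proof
    fix y assume "y \<in> component W x"
    then have "W\<^sup>*\<^sup>* x y" unfolding component_def by simp
    then show "y \<in> (\<lambda>w. ev w x) ` {w. set w \<subseteq> S}"
    proof (induction rule: rtranclp_induct)
      case base
      then show ?case by (intro image_eqI[of _ _ "[]"]) auto
    next
      case (step y z)
      then obtain w where w: "set w \<subseteq> S" "y = ev w x" by blast
      have "schreier S y z" using step(2) sw by simp
      then obtain t where t: "t \<in> S" "t y = z" unfolding schreier_def by blast
      then have "z = (\<lambda>w. ev w x) (t # w)" using w by simp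
      then show ?case by (rule image_eqI) (use w t in simp)
    qed
  qed
next
  have "set w \<subseteq> S \<Longrightarrow> W\<^sup>*\<^sup>* x (ev w x)" for w
  proof (induction w)
    case Nil then show ?case by simp
  next
    case (Cons t w)
    then have ih: "W\<^sup>*\<^sup>* x (ev w x)" "t \<in> S" by auto
    show ?case
    proof (cases "t (ev w x) = ev w x")
      case True then show ?thesis using ih by simp
    next
      case False
      then have "W (ev w x) (t (ev w x))" using ih sw unfolding schreier_def by auto
      then show ?thesis using ih by simp
    qed
  qed
  note R = this
  show "(\<lambda>w. ev w x) ` {w. set w \<subseteq> S} \<subseteq> component W x"
  proof
    fix y assume "y \<in> (\<lambda>w. ev w x) ` {w. set w \<subseteq> S}"
    then obtain w where "set w \<subseteq> S" "y = ev w x" by blast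
    then show "y \<in> component W x" unfolding component_def using R by blast
  qed
qed

lemma GW_step:
  fixes W :: "'a::countable \<Rightarrow> 'a \<Rightarrow> bool"
  assumes ga: "gen_action S" and sw: "schreier S = W" and g: "GW W a b"
  shows "\<exists>t\<in>S. tilde t a = b"
proof -
  obtain S' s where S': "gen_action S'" "schreier S' = W" "s \<in> S'" "tilde s a = b"
    and ab: "a \<in> betaX" "a \<noteq> b" using g unfolding GW_def by blast
  have uf: "is_ultrafilter a" using ab unfolding betaX_def by simp
  have bs: "bij s" using S' unfolding gen_action_def by blast
  have "(\<Union>t\<in>insert id S. {x. s x = t x}) = UNIV"
  proof -
    have "\<exists>t\<in>insert id S. s x = t x" for x
    proof (cases "s x = x")
      case True then show ?thesis by auto
    next
      case False
      then have "schreier S' x (s x)" unfolding schreier_def using S'(3) by (metis)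
      then have "schreier S x (s x)" using S' sw by simp
      then show ?thesis unfolding schreier_def by (metis insert_iff)
    qed
    then show ?thesis by blast
  qed
  then have "(\<Union>t\<in>insert id S. {x. s x = t x}) \<in> a" using uf unfolding is_ultrafilter_def by simp
  moreover have "finite (insert id S)" using ga unfolding gen_action_def by simp
  ultimately obtain t where t: "t \<in> insert id S" "{x. s x = t x} \<in> a" using uf_UN[OF uf] by blast
  have bt: "bij t" using t(1) ga unfolding gen_action_def by auto
  have "tilde s a = tilde t a" by (rule tilde_agree[OF uf bs bt t(2)])
  then show ?thesis using t(1) tilde_id[of a] S'(4) ab(2) by auto
qed

lemma compG:
  fixes W :: "'a::countable \<Rightarrow> 'a \<Rightarrow> bool"
  assumes ga: "gen_action S" and sw: "schreier S = W" and om: "\<omega> \<in> betaX"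
  shows "component (GW W) \<omega> = (\<lambda>w. tilde (ev w) \<omega>) ` {w. set w \<subseteq> S}"
proof
  show "component (GW W) \<omega> \<subseteq> (\<lambda>w. tilde (ev w) \<omega>) ` {w. set w \<subseteq> S}"
  proof
    fix y assume "y \<in> component (GW W) \<omega>"
    then have "(GW W)\<^sup>*\<^sup>* \<omega> y" unfolding component_def by simp
    then show "y \<in> (\<lambda>w. tilde (ev w) \<omega>) ` {w. set w \<subseteq> S}"
    proof (induction rule: rtranclp_induct)
      case base
      have "\<omega> = (\<lambda>w. tilde (ev w) \<omega>) []" by (simp add: tilde_eq)
      then show ?case by (rule image_eqI) simp
    next
      case (step y z)
      then obtain w where w: "set w \<subseteq> S" "y = tilde (ev w) \<omega>" by blast
      obtain t where t: "t \<in> S" "tilde t y = z" using GW_step[OF ga sw step(2)] by blast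
      have "bij t" using t ga unfolding gen_action_def by blast
      then have "z = tilde (ev (t # w)) \<omega>" using t w tilde_comp[of t "ev w" \<omega>] ev_bij[OF ga w(1)] by simp
      then have "z = (\<lambda>w. tilde (ev w) \<omega>) (t # w)" by simp
      then show ?case by (rule image_eqI) (use w t in simp)
    qed
  qed
next
  have "set w \<subseteq> S \<Longrightarrow> (GW W)\<^sup>*\<^sup>* \<omega> (tilde (ev w) \<omega>)" for w
  proof (induction w)
    case Nil
    have "tilde (ev []) \<omega> = \<omega>" by (simp add: tilde_eq)
    show ?case unfolding \<open>tilde (ev []) \<omega> = \<omega>\<close> by (rule rtranclp.rtrancl_refl)
  next
    case (Cons t w)
    then have ih: "(GW W)\<^sup>*\<^sup>* \<omega> (tilde (ev w) \<omega>)" "t \<in> S" "set w \<subseteq> S" by auto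
    have bt: "bij t" using ih ga unfolding gen_action_def by blast
    have e: "tilde (ev (t # w)) \<omega> = tilde t (tilde (ev w) \<omega>)" using tilde_comp[OF bt ev_bij[OF ga ih(3)]] by simp
    have yb: "tilde (ev w) \<omega> \<in> betaX" using tilde_betaX[OF ev_bij[OF ga ih(3)] om] .
    show ?case
    proof (cases "tilde t (tilde (ev w) \<omega>) = tilde (ev w) \<omega>")
      case True show ?thesis unfolding e True by (rule ih(1))
    next
      case False
      then have "GW W (tilde (ev w) \<omega>) (tilde t (tilde (ev w) \<omega>))"
        unfolding GW_def using yb tilde_betaX[OF bt yb] ga sw ih(2) by blast
      then show ?thesis unfolding e by (rule rtranclp.rtrancl_into_rtrancl[OF ih(1)])
    qed
  qed
  note R = this
  show "(\<lambda>w. tilde (ev w) \<omega>) ` {w. set w \<subseteq> S} \<subseteq> component (GW W) \<omega>"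
  proof
    fix y assume "y \<in> (\<lambda>w. tilde (ev w) \<omega>) ` {w. set w \<subseteq> S}"
    then obtain w where "set w \<subseteq> S" "y = tilde (ev w) \<omega>" by blast
    then show "y \<in> component (GW W) \<omega>" unfolding component_def using R by blast
  qed
qed



definition ballW :: "('a \<Rightarrow> 'a) set \<Rightarrow> nat \<Rightarrow> 'a \<Rightarrow> 'a set" where
  "ballW S r x = (\<lambda>w. ev w x) ` {w. set w \<subseteq> S \<and> length w \<le> r}"

lemma ball_grow:
  assumes ga: "gen_action S"
  shows "Suc r \<le> card (ballW S r x) \<or> ballW S r x = (\<lambda>w. ev w x) ` {w. set w \<subseteq> S}"
proof (induction r)
  case 0
  have "{w. set w \<subseteq> S \<and> length w \<le> 0} = {[]}" by auto
  then have "ballW S 0 x = {x}" unfolding ballW_def by simp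
  then show ?case by simp
next
  case (Suc r)
  let ?C = "(\<lambda>w. ev w x) ` {w. set w \<subseteq> S}"
  have finS: "finite S" using ga unfolding gen_action_def by simp
  have fin: "finite (ballW S n x)" for n unfolding ballW_def using finite_lists_length_le[OF finS] by simp
  have sub1: "ballW S r x \<subseteq> ballW S (Suc r) x" unfolding ballW_def by auto
  have sub2: "ballW S n x \<subseteq> ?C" for n unfolding ballW_def by auto
  show ?case
  proof (cases "ballW S r x = ?C")
    case True
    then show ?thesis using sub1 sub2[of "Suc r"] by blast
  next
    case False
    then have cr: "Suc r \<le> card (ballW S r x)" using Suc.IH by blast
    show ?thesis
    proof (cases "ballW S (Suc r) x = ballW S r x")
      case True
      have "set w \<subseteq> S \<Longrightarrow> ev w x \<in> ballW S r x" for w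
      proof (induction w)
        case Nil
        show ?case unfolding ballW_def by (rule image_eqI[of _ _ "[]"]) simp_all
      next
        case (Cons t w)
        then obtain w' where w': "set w' \<subseteq> S" "length w' \<le> r" "ev w x = ev w' x"
          unfolding ballW_def by auto
        have "ev (t # w) x = (\<lambda>w. ev w x) (t # w')" using w' by simp
        moreover have "t # w' \<in> {w. set w \<subseteq> S \<and> length w \<le> Suc r}" using w' Cons.prems by simp
        ultimately have "ev (t # w) x \<in> ballW S (Suc r) x" unfolding ballW_def by (rule image_eqI)
        then show ?case using True by simp
      qed
      then have "?C \<subseteq> ballW S r x" by blast
      then show ?thesis using True sub2[of "Suc r"] by blast
    next
      case False
      then have "ballW S r x \<subset> ballW S (Suc r) x" using sub1 by blast
      then have "card (ballW S r x) < card (ballW S (Suc r) x)" using fin by (intro psubset_card_mono) auto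
      then show ?thesis using cr by simp
    qed
  qed
qed

lemma key:
  fixes W :: "'a::countable \<Rightarrow> 'a \<Rightarrow> bool"
  assumes ga: "gen_action S" and sw: "schreier S = W" and om: "\<omega> \<in> betaX"
  shows "({x. geS k (component W x)} \<in> \<omega>) = geS k (component (GW W) \<omega>)"
proof -
  have uf: "is_ultrafilter \<omega>" using om unfolding betaX_def by simp
  let ?Wd = "{w. set w \<subseteq> S}"
  let ?Ds = "\<lambda>ws. {x. distinct (map (\<lambda>w. ev w x) ws)}"
  have cG: "geS k (component (GW W) \<omega>) = (\<exists>ws. length ws = k \<and> set ws \<subseteq> ?Wd \<and> ?Ds ws \<in> \<omega>)"
  proof -
    have "geS k (component (GW W) \<omega>) = (\<exists>ws. length ws = k \<and> set ws \<subseteq> ?Wd \<and> distinct (map (\<lambda>w. tilde (ev w) \<omega>) ws))"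
      unfolding compG[OF ga sw om] by (rule geS_image)
    also have "\<dots> = (\<exists>ws. length ws = k \<and> set ws \<subseteq> ?Wd \<and> ?Ds ws \<in> \<omega>)"
    proof -
      have "set ws \<subseteq> ?Wd \<Longrightarrow> (?Ds ws \<in> \<omega>) = distinct (map (\<lambda>w. tilde (ev w) \<omega>) ws)" for ws
        by (rule dset_iff[OF uf]) (use ev_bij[OF ga] in auto)
      then show ?thesis by metis
    qed
    finally show ?thesis .
  qed
  have cW: "geS k (component W x) = (\<exists>ws. length ws = k \<and> set ws \<subseteq> ?Wd \<and> x \<in> ?Ds ws)" for x
    unfolding compW[OF ga sw] geS_image by simp
  show ?thesis
  proof
    assume G: "{x. geS k (component W x)} \<in> \<omega>"
    define Q where "Q = {w. set w \<subseteq> S \<and> length w \<le> k}"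
    define WL where "WL = {ws. set ws \<subseteq> Q \<and> length ws \<le> k \<and> length ws = k}"
    have finS: "finite S" using ga unfolding gen_action_def by simp
    have finQ: "finite Q" unfolding Q_def using finite_lists_length_le[OF finS] .
    have finWL: "finite WL" unfolding WL_def
      by (rule finite_subset[OF _ finite_lists_length_le[OF finQ, of k]]) auto
    have "{x. geS k (component W x)} \<subseteq> (\<Union>ws\<in>WL. ?Ds ws)"
    proof
      fix x assume "x \<in> {x. geS k (component W x)}"
      then have gx: "geS k (component W x)" by simp
      have "geS k (ballW S k x)"
      proof (cases "Suc k \<le> card (ballW S k x)")
        case True
        then have "k \<le> card (ballW S k x)" by simp
        then obtain T where "T \<subseteq> ballW S k x" "card T = k" "finite T" by (rule obtain_subset_with_card_n)
        then show ?thesis unfolding geS_def by blast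
      next
        case False
        then have "ballW S k x = (\<lambda>w. ev w x) ` {w. set w \<subseteq> S}" using ball_grow[OF ga, of k x] by blast
        then show ?thesis using gx compW[OF ga sw] by simp
      qed
      then obtain ws where "length ws = k" "set ws \<subseteq> Q" "distinct (map (\<lambda>w. ev w x) ws)"
        unfolding ballW_def geS_image Q_def by blast
      then show "x \<in> (\<Union>ws\<in>WL. ?Ds ws)" unfolding WL_def by auto
    qed
    then have "(\<Union>ws\<in>WL. ?Ds ws) \<in> \<omega>" using uf_up[OF uf G] by blast
    then obtain ws where ws: "ws \<in> WL" "?Ds ws \<in> \<omega>" using uf_UN[OF uf finWL] by blast
    then have "length ws = k \<and> set ws \<subseteq> ?Wd" unfolding WL_def Q_def by auto
    then show "geS k (component (GW W) \<omega>)" unfolding cG using ws(2) by blast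
  next
    assume "geS k (component (GW W) \<omega>)"
    then obtain ws where ws: "length ws = k" "set ws \<subseteq> ?Wd" "?Ds ws \<in> \<omega>" unfolding cG by blast
    have "?Ds ws \<subseteq> {x. geS k (component W x)}" unfolding cW using ws by blast
    then show "{x. geS k (component W x)} \<in> \<omega>" using uf_up[OF uf ws(3)] by blast
  qed
qed



theorem lemma4p4:
  fixes T W :: "'a::countable \<Rightarrow> 'a \<Rightarrow> bool"
    and \<mu> :: "'a set \<Rightarrow> real"
    and M :: "'a set set measure"
    and l :: nat
  assumes "infinite (UNIV :: 'a set)"
    and "is_graph T" and "bounded_degree T"
    and "invariant_mean T \<mu>"
    and "mean_extension \<mu> M"
    and "is_graph W" and "\<forall>x y. W x y \<longrightarrow> T x y"
    and "l \<ge> 1"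
  shows "{\<omega> \<in> betaX. comp_size_eq (GW W) l \<omega>} \<in> sets M \<and>
         \<mu> {x. comp_size_eq W l x} = measure M {\<omega> \<in> betaX. comp_size_eq (GW W) l \<omega>}"
proof -
  obtain d where dT: "\<And>x. finite {y. T x y} \<and> card {y. T x y} \<le> d"
    using assms(3) unfolding bounded_degree_def by blast
  have dW: "finite {y. W x y} \<and> card {y. W x y} \<le> d" for x
  proof -
    have sub: "{y. W x y} \<subseteq> {y. T x y}" using assms(7) by blast
    then have "card {y. W x y} \<le> card {y. T x y}" using dT by (intro card_mono) auto
    then show ?thesis using dT[of x] finite_subset[OF sub] by linarith
  qed
  obtain S where ga: "gen_action S" and sw: "schreier S = W"
    using schreier_exists[OF assms(6) dW] by blast
  define A where "A = {x. comp_size_eq W l x}"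
  have seteq: "{\<omega> \<in> betaX. comp_size_eq (GW W) l \<omega>} = UA A"
  proof (rule set_eqI)
    fix \<omega>
    show "\<omega> \<in> {\<omega> \<in> betaX. comp_size_eq (GW W) l \<omega>} \<longleftrightarrow> \<omega> \<in> UA A"
    proof (cases "\<omega> \<in> betaX")
      case False then show ?thesis unfolding UA_def by simp
    next
      case True
      have uf: "is_ultrafilter \<omega>" using True unfolding betaX_def by simp
      have Aeq: "A = {x. geS l (component W x)} \<inter> - {x. geS (Suc l) (component W x)}"
        unfolding A_def using cse_iff[of W l] by blast
      have "(A \<in> \<omega>) = ({x. geS l (component W x)} \<in> \<omega> \<and> \<not> {x. geS (Suc l) (component W x)} \<in> \<omega>)"
        unfolding Aeq uf_Int[OF uf] uf_compl[OF uf] ..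
      also have "\<dots> = (geS l (component (GW W) \<omega>) \<and> \<not> geS (Suc l) (component (GW W) \<omega>))"
        using key[OF ga sw True, of l] key[OF ga sw True, of "Suc l"] by (simp only:)
      also have "\<dots> = comp_size_eq (GW W) l \<omega>" by (rule cse_iff[symmetric])
      finally show ?thesis unfolding UA_def using True by auto
    qed
  qed
  have me: "prob_space M" "sets M = beta_borel_sets" "\<forall>A. measure M (UA A) = \<mu> A"
    using assms(5) unfolding mean_extension_def by auto
  have "openin beta_top (UA A)" unfolding beta_top_def openin_topology_generated_by_iff
    by (rule generate_topology_on.Basis) simp
  then have "UA A \<in> sets M" unfolding me(2) beta_borel_sets_def by (intro sigma_sets.Basic) simp
  then show ?thesis unfolding seteq A_def[symmetric] using me(3) by simp
qed

end
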